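(* Let $U\in\mathcal{U}_N$ be a unitary acting non-trivially only on the qubits in $R\subseteq[n]$ (i.e. $U=U_R\otimes I_{\overline{R}}$), and let $\varepsilon>0$. Consider the procedure that repeats $t=O\!\left(\frac{\log|R|}{\varepsilon}\right)$ times: prepare the Choi–Jamiołkowski state $|v(U)\rangle$ (one query to $U$), measure all $2n$ qubits in the Bell basis $\{|v(\sigma_x)\rangle\}_{x\in\mathbb{Z}_4^n}$, and add $\mathrm{supp}(x)$ of the outcome $x$ to a set $S$ (initially empty); finally output $S$. This procedure makes $t$ queries to $U$ and, with high probability, outputs $S\subseteq[n]$ such that (1) $S$ contains every qubit $i\in[n]$ with $\mathrm{Inf}_i[U]\ge\varepsilon$, and (2) every $i\in S$ satisfies $\mathrm{Inf}_i[U]>0$.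
   Context: $N=2^n$, $\mathcal{U}_N$ is the set of $N\times N$ unitaries. For $x\in\mathbb{Z}_4^n$, $\sigma_x=\sigma_{x_1}\otimes\cdots\otimes\sigma_{x_n}$ with $\sigma_0=I,\sigma_1=X,\sigma_2=Y,\sigma_3=Z$, and $\mathrm{supp}(x)=\{i:x_i\ne0\}$. Writing $U=\sum_x\widehat{U}(x)\sigma_x$, $\mathrm{Inf}_i[U]=\sum_{x:\,x_i\ne0}|\widehat{U}(x)|^2$. The Choi–Jamiołkowski state of an $N\times N$ matrix $A$ is $|v(A)\rangle=(A\otimes I)\frac{1}{\sqrt N}\sum_{i=0}^{N-1}|i\rangle|i\rangle$; the states $|v(\sigma_x)\rangle$, $x\in\mathbb{Z}_4^n$, form an orthonormal basis of $\mathbb{C}^N\otimes\mathbb{C}^N$. *)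

theory Defs
  imports Complex_Main
begin

text \<open>Qubits are indexed by 0..n-1; a computational basis index a < 2^n
  has qubit i given by bit i of a.\<close>

definition qbit :: "nat \<Rightarrow> nat \<Rightarrow> nat" where
  "qbit a i = (a div 2 ^ i) mod 2"

text \<open>Single-qubit Paulis sigma_0 = I, sigma_1 = X, sigma_2 = Y, sigma_3 = Z.\<close>
definition pauli1 :: "nat \<Rightarrow> nat \<Rightarrow> nat \<Rightarrow> complex" where
  "pauli1 k r c =
     (if k = 0 then (if r = c then 1 else 0)
      else if k = 1 then (if r \<noteq> c then 1 else 0)
      else if k = 2 then (if r = 0 \<and> c = 1 then - \<i> else if r = 1 \<and> c = 0 then \<i> else 0)
      else (if r = c then (if r = 0 then 1 else -1) else 0))"

text \<open>Elements of Z_4^n are lists of length n with entries < 4.\<close>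
definition pstrings :: "nat \<Rightarrow> nat list set" where
  "pstrings n = {x. length x = n \<and> (\<forall>k\<in>set x. k < 4)}"

definition supp :: "nat list \<Rightarrow> nat set" where
  "supp x = {i. i < length x \<and> x ! i \<noteq> 0}"

definition pauli :: "nat \<Rightarrow> nat list \<Rightarrow> nat \<Rightarrow> nat \<Rightarrow> complex" where
  "pauli n x a b = (\<Prod>i<n. pauli1 (x ! i) (qbit a i) (qbit b i))"

definition unitary :: "nat \<Rightarrow> (nat \<Rightarrow> nat \<Rightarrow> complex) \<Rightarrow> bool" where
  "unitary n U \<longleftrightarrow> (\<forall>a<2^n. \<forall>b<2^n.
      (\<Sum>k<2^n. cnj (U k a) * U k b) = (if a = b then 1 else 0))"

text \<open>U = U_R \<otimes> I on the complement of R.\<close>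
definition acts_only_on :: "nat \<Rightarrow> (nat \<Rightarrow> nat \<Rightarrow> complex) \<Rightarrow> nat set \<Rightarrow> bool" where
  "acts_only_on n U R \<longleftrightarrow> (\<exists>V :: (nat \<Rightarrow> nat) \<Rightarrow> (nat \<Rightarrow> nat) \<Rightarrow> complex.
     \<forall>a<2^n. \<forall>b<2^n.
       U a b = V (\<lambda>i. if i \<in> R then qbit a i else 0) (\<lambda>i. if i \<in> R then qbit b i else 0)
               * (if (\<forall>i<n. i \<notin> R \<longrightarrow> qbit a i = qbit b i) then 1 else 0))"

text \<open>Pauli coefficient: U = sum_x hatU(x) sigma_x, hatU(x) = tr(sigma_x^dagger U)/N.\<close>
definition fourier :: "nat \<Rightarrow> (nat \<Rightarrow> nat \<Rightarrow> complex) \<Rightarrow> nat list \<Rightarrow> complex" where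
  "fourier n U x = (\<Sum>a<2^n. \<Sum>b<2^n. cnj (pauli n x b a) * U b a) / of_nat (2^n)"

definition Inf :: "nat \<Rightarrow> (nat \<Rightarrow> nat \<Rightarrow> complex) \<Rightarrow> nat \<Rightarrow> real" where
  "Inf n U i = (\<Sum>x\<in>{x\<in>pstrings n. x ! i \<noteq> 0}. (cmod (fourier n U x))^2)"

text \<open>Choi--Jamiolkowski state (A \<otimes> I) N^{-1/2} sum_i |i>|i>, amplitude at |a>|c>.\<close>
definition choi :: "nat \<Rightarrow> (nat \<Rightarrow> nat \<Rightarrow> complex) \<Rightarrow> nat \<Rightarrow> nat \<Rightarrow> complex" where
  "choi n A a c = A a c / complex_of_real (sqrt (2^n))"

text \<open>Probability of Bell-basis outcome x when measuring |v(U)>: |<v(sigma_x)|v(U)>|^2.\<close>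
definition bell_prob :: "nat \<Rightarrow> (nat \<Rightarrow> nat \<Rightarrow> complex) \<Rightarrow> nat list \<Rightarrow> real" where
  "bell_prob n U x = (cmod (\<Sum>a<2^n. \<Sum>c<2^n. cnj (choi n (pauli n x) a c) * choi n U a c))^2"

text \<open>Output of the procedure on the outcome sequence xs (t independent measurements).\<close>
definition out_set :: "nat list list \<Rightarrow> nat set" where
  "out_set xs = (\<Union>x\<in>set xs. supp x)"

definition good_output :: "nat \<Rightarrow> (nat \<Rightarrow> nat \<Rightarrow> complex) \<Rightarrow> real \<Rightarrow> nat set \<Rightarrow> bool" where
  "good_output n U \<epsilon> S \<longleftrightarrow>
     S \<subseteq> {..<n} \<and> {i. i < n \<and> Inf n U i \<ge> \<epsilon>} \<subseteq> S \<and> (\<forall>i\<in>S. Inf n U i > 0)"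

definition success_prob :: "nat \<Rightarrow> (nat \<Rightarrow> nat \<Rightarrow> complex) \<Rightarrow> real \<Rightarrow> nat \<Rightarrow> real" where
  "success_prob n U \<epsilon> t =
     (\<Sum>xs\<in>{xs. length xs = t \<and> set xs \<subseteq> pstrings n}.
        (\<Prod>x\<leftarrow>xs. bell_prob n U x) * (if good_output n U \<epsilon> (out_set xs) then 1 else 0))"

end

theory Submission
  imports Defs
begin


lemma qbit_bit: "qbit a i = (if bit a i then 1 else 0)"
  unfolding qbit_def by (simp add: bit_iff_odd odd_iff_mod_2_eq_one)

lemma qbit_le1: "qbit a i \<le> 1"
  by (simp add: qbit_bit)

lemma qbit_eq_imp_eq:
  assumes "a < 2^n" "b < 2^n" "\<forall>i<n. qbit a i = qbit b i"
  shows "a = b"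
proof -
  have ta: "take_bit n a = a" "take_bit n b = b" using assms take_bit_nat_eq_self_iff by auto
  have "bit (take_bit n a) j = bit (take_bit n b) j" for j
    using assms(3) by (cases "j < n") (auto simp: bit_take_bit_iff qbit_bit split: if_splits)
  then show ?thesis using ta by (metis bit_eqI)
qed

lemma flip_lt: assumes "a < 2^n" "i < n" shows "flip_bit i a < (2::nat)^n"
proof -
  have "take_bit n a = a" using assms(1) take_bit_nat_eq_self_iff by blast
  then have "take_bit n (flip_bit i a) = flip_bit i a"
    using assms by (simp add: take_bit_flip_bit_eq)
  then show ?thesis by (simp add: take_bit_nat_eq_self_iff)
qed

lemma qbit_flip_other: "j \<noteq> i \<Longrightarrow> qbit (flip_bit i a) j = qbit a j"
  by (simp add: qbit_bit bit_flip_bit_iff)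

lemma qbit_flip_same: "qbit (flip_bit i a) i = 1 - qbit a i"
  by (simp add: qbit_bit bit_flip_bit_iff)

lemma flip_flip: "flip_bit i (flip_bit i (a::nat)) = a"
  by (rule bit_eqI) (auto simp: bit_flip_bit_iff)



lemma finite_pstrings: "finite (pstrings n)"
proof -
  have "pstrings n = {xs. set xs \<subseteq> {..<4} \<and> length xs = n}"
    unfolding pstrings_def by auto
  then show ?thesis using finite_lists_length_eq[of "{..<4::nat}" n] by simp
qed

lemma lists_Suc: "{xs. length xs = Suc t \<and> set xs \<subseteq> A} = (\<lambda>(x,ys). x#ys) ` (A \<times> {xs. length xs = t \<and> set xs \<subseteq> A})"
proof (rule set_eqI)
  fix xs show "xs \<in> {xs. length xs = Suc t \<and> set xs \<subseteq> A} \<longleftrightarrow> xs \<in> (\<lambda>(x,ys). x#ys) ` (A \<times> {xs. length xs = t \<and> set xs \<subseteq> A})"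
    by (cases xs) auto
qed

lemma sum_lists_prod:
  fixes p :: "'a \<Rightarrow> 'b::comm_semiring_1"
  assumes "finite A"
  shows "(\<Sum>xs\<in>{xs. length xs = t \<and> set xs \<subseteq> A}. prod_list (map p xs)) = (sum p A)^t"
proof (induction t)
  case 0
  have "{xs. length xs = 0 \<and> set xs \<subseteq> A} = {[]}" by auto
  then show ?case by simp
next
  case (Suc t)
  let ?L = "{xs. length xs = t \<and> set xs \<subseteq> A}"
  have inj: "inj_on (\<lambda>(x,ys). x#ys) (A \<times> ?L)" by (auto simp: inj_on_def)
  have "(\<Sum>xs\<in>{xs. length xs = Suc t \<and> set xs \<subseteq> A}. prod_list (map p xs))
      = (\<Sum>(x,ys)\<in>A \<times> ?L. p x * prod_list (map p ys))"
    unfolding lists_Suc by (subst sum.reindex[OF inj]) (simp add: case_prod_unfold)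
  also have "\<dots> = (\<Sum>x\<in>A. \<Sum>ys\<in>?L. p x * prod_list (map p ys))"
    by (rule sum.cartesian_product[symmetric])
  also have "\<dots> = sum p A * (sum p A)^t"
    using Suc by (simp add: sum_distrib_left[symmetric] sum_distrib_right)
  finally show ?case by simp
qed

lemma pstrings_Suc: "pstrings (Suc n) = (\<lambda>(k,xs). k#xs) ` ({..<4} \<times> pstrings n)"
proof (rule set_eqI)
  fix xs show "xs \<in> pstrings (Suc n) \<longleftrightarrow> xs \<in> (\<lambda>(k,xs). k#xs) ` ({..<4} \<times> pstrings n)"
    unfolding pstrings_def by (cases xs) auto
qed

lemma sum_pstrings_prod:
  fixes f :: "nat \<Rightarrow> nat \<Rightarrow> 'b::comm_semiring_1"
  shows "(\<Sum>x\<in>pstrings n. \<Prod>i<n. f i (x!i)) = (\<Prod>i<n. \<Sum>k<4. f i k)"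
proof (induction n arbitrary: f)
  case 0
  have "pstrings 0 = {[]}" unfolding pstrings_def by auto
  then show ?case by simp
next
  case (Suc n)
  have inj: "inj_on (\<lambda>(k,xs). k#xs) ({..<4::nat} \<times> pstrings n)" by (auto simp: inj_on_def)
  have "(\<Sum>x\<in>pstrings (Suc n). \<Prod>i<Suc n. f i (x!i))
      = (\<Sum>(k,xs)\<in>{..<4} \<times> pstrings n. f 0 k * (\<Prod>i<n. f (Suc i) (xs!i)))"
    unfolding pstrings_Suc by (subst sum.reindex[OF inj]) (simp add: case_prod_unfold prod.lessThan_Suc_shift del: prod.lessThan_Suc)
  also have "\<dots> = (\<Sum>k<4. \<Sum>xs\<in>pstrings n. f 0 k * (\<Prod>i<n. f (Suc i) (xs!i)))"
    by (rule sum.cartesian_product[symmetric])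
  also have "\<dots> = (\<Sum>k<4. f 0 k) * (\<Prod>i<n. \<Sum>k<4. f (Suc i) k)"
    using Suc[of "\<lambda>i. f (Suc i)"] by (simp add: sum_distrib_left[symmetric] sum_distrib_right)
  also have "\<dots> = (\<Prod>i<Suc n. \<Sum>k<4. f i k)" by (simp add: prod.lessThan_Suc_shift del: prod.lessThan_Suc)
  finally show ?case .
qed



lemma pauli1_compl:
  assumes "r < 2" "c < 2" "r' < 2" "c' < 2"
  shows "(\<Sum>k<4. cnj (pauli1 k r c) * pauli1 k r' c') = (if r = r' \<and> c = c' then 2 else 0)"
proof -
  have r: "r = 0 \<or> r = 1" and c: "c = 0 \<or> c = 1" and r': "r' = 0 \<or> r' = 1" and c': "c' = 0 \<or> c' = 1"
    using assms by auto
  have s: "(\<Sum>k<4::nat. f k) = f 0 + f 1 + f 2 + (f 3::complex)" for f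
    by (simp add: eval_nat_numeral)
  show ?thesis unfolding s using r c r' c' by (auto simp: pauli1_def)
qed

lemma qbit_lt2: "qbit a i < 2" using qbit_le1[of a i] by simp

lemma pauli_compl:
  assumes "a < 2^n" "b < 2^n" "a' < 2^n" "b' < 2^n"
  shows "(\<Sum>x\<in>pstrings n. cnj (pauli n x b a) * pauli n x b' a') = (if b = b' \<and> a = a' then 2^n else 0)"
proof -
  have "(\<Sum>x\<in>pstrings n. cnj (pauli n x b a) * pauli n x b' a')
     = (\<Sum>x\<in>pstrings n. \<Prod>i<n. cnj (pauli1 (x!i) (qbit b i) (qbit a i)) * pauli1 (x!i) (qbit b' i) (qbit a' i))"
    unfolding pauli_def by (simp add: prod.distrib)
  also have "\<dots> = (\<Prod>i<n. \<Sum>k<4. cnj (pauli1 k (qbit b i) (qbit a i)) * pauli1 k (qbit b' i) (qbit a' i))"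
    by (rule sum_pstrings_prod)
  also have "\<dots> = (\<Prod>i<n. if qbit b i = qbit b' i \<and> qbit a i = qbit a' i then 2 else 0)"
    by (simp add: pauli1_compl qbit_lt2)
  also have "\<dots> = (if b = b' \<and> a = a' then 2^n else 0)"
  proof (cases "b = b' \<and> a = a'")
    case True then show ?thesis by simp
  next
    case False
    then have "\<exists>i<n. \<not> (qbit b i = qbit b' i \<and> qbit a i = qbit a' i)"
      using qbit_eq_imp_eq assms by metis
    then show ?thesis using False by auto
  qed
  finally show ?thesis .
qed

lemma parseval:
  assumes "unitary n U"
  shows "(\<Sum>x\<in>pstrings n. (cmod (fourier n U x))^2) = 1"
proof -
  define N :: nat where "N = 2^n"
  define I where "I = {..<N} \<times> {..<N}"
  define g where "g x p = cnj (pauli n x (snd p) (fst p)) * U (snd p) (fst p)" for x p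
  have fI: "finite I" unfolding I_def by simp
  have T: "fourier n U x = (\<Sum>p\<in>I. g x p) / of_nat N" for x
    unfolding fourier_def g_def I_def N_def by (simp add: sum.cartesian_product case_prod_unfold)
  have "(\<Sum>x\<in>pstrings n. (\<Sum>p\<in>I. g x p) * cnj (\<Sum>p\<in>I. g x p))
      = (\<Sum>x\<in>pstrings n. \<Sum>p\<in>I. \<Sum>q\<in>I. g x p * cnj (g x q))"
    by (simp add: sum_product cnj_sum)
  also have "\<dots> = (\<Sum>p\<in>I. \<Sum>q\<in>I. \<Sum>x\<in>pstrings n. g x p * cnj (g x q))"
    by (simp add: sum.swap[of _ "pstrings n"] sum.swap[of _ "pstrings n" I])
  also have "\<dots> = (\<Sum>p\<in>I. \<Sum>q\<in>I. (if p = q then of_nat N else 0) * (U (snd p) (fst p) * cnj (U (snd q) (fst q))))"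
  proof (intro sum.cong refl)
    fix p q assume p: "p \<in> I" and q: "q \<in> I"
    have "(\<Sum>x\<in>pstrings n. g x p * cnj (g x q))
        = (\<Sum>x\<in>pstrings n. cnj (pauli n x (snd p) (fst p)) * pauli n x (snd q) (fst q)) * (U (snd p) (fst p) * cnj (U (snd q) (fst q)))"
      unfolding g_def by (simp add: sum_distrib_left sum_distrib_right mult_ac)
    also have "\<dots> = (if p = q then of_nat N else 0) * (U (snd p) (fst p) * cnj (U (snd q) (fst q)))"
      using p q unfolding I_def N_def by (subst pauli_compl) (auto simp: prod_eq_iff)
    finally show "(\<Sum>x\<in>pstrings n. g x p * cnj (g x q)) = \<dots>" .
  qed
  also have "\<dots> = (\<Sum>p\<in>I. of_nat N * (U (snd p) (fst p) * cnj (U (snd p) (fst p))))"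
    using fI by (simp add: if_distrib[of "\<lambda>z. z * _"] sum.delta cong: if_cong)
  also have "\<dots> = of_nat N * (\<Sum>a<N. \<Sum>b<N. cnj (U b a) * U b a)"
    unfolding I_def by (simp add: sum.cartesian_product case_prod_unfold sum_distrib_left mult_ac)
  also have "\<dots> = of_nat N * of_nat N"
    using assms unfolding unitary_def N_def by simp
  finally have main: "(\<Sum>x\<in>pstrings n. (\<Sum>p\<in>I. g x p) * cnj (\<Sum>p\<in>I. g x p)) = of_nat N * of_nat N" .
  have "complex_of_real (\<Sum>x\<in>pstrings n. (cmod (fourier n U x))^2)
      = (\<Sum>x\<in>pstrings n. fourier n U x * cnj (fourier n U x))"
    by (simp only: of_real_sum complex_norm_square)
  also have "\<dots> = (\<Sum>x\<in>pstrings n. (\<Sum>p\<in>I. g x p) * cnj (\<Sum>p\<in>I. g x p) / (of_nat N * of_nat N))"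
    unfolding T by (intro sum.cong refl) (simp del: cnj_sum)
  also have "\<dots> = (\<Sum>x\<in>pstrings n. (\<Sum>p\<in>I. g x p) * cnj (\<Sum>p\<in>I. g x p)) / (of_nat N * of_nat N)"
    by (simp only: sum_divide_distrib)
  also have "\<dots> = 1" unfolding main N_def by simp
  finally show ?thesis by (metis of_real_eq_1_iff)
qed



lemma bell_prob_eq: "bell_prob n U x = (cmod (fourier n U x))^2"
proof -
  define q where "q = sqrt ((2::real)^n)"
  have qq: "q * q = 2^n" unfolding q_def by simp
  have t: "cnj (A / complex_of_real q) * (B / complex_of_real q) = cnj A * B / of_nat (2^n)" for A B
  proof -
    have "cnj (A / complex_of_real q) * (B / complex_of_real q) = cnj A * B / complex_of_real (q*q)"
      by (simp add: field_simps)
    also have "complex_of_real (q*q) = of_nat (2^n)" unfolding qq by simp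
    finally show ?thesis .
  qed
  have "(\<Sum>a<2^n. \<Sum>c<2^n. cnj (choi n (pauli n x) a c) * choi n U a c)
      = (\<Sum>a<2^n. \<Sum>c<2^n. cnj (pauli n x a c) * U a c / of_nat (2^n))"
    unfolding choi_def q_def[symmetric] t by (rule refl)
  also have "\<dots> = fourier n U x"
    unfolding fourier_def sum_divide_distrib by (rule sum.swap)
  finally show ?thesis unfolding bell_prob_def by simp
qed

lemma fourier_vanish:
  assumes A: "acts_only_on n U R" and i: "i < n" "i \<notin> R" and x: "x \<in> pstrings n" "x ! i \<noteq> 0"
  shows "fourier n U x = 0"
proof -
  define N :: nat where "N = 2^n"
  define \<phi> :: "nat \<Rightarrow> nat" where "\<phi> = flip_bit i"
  define G where "G a b = cnj (pauli n x b a) * U b a" for a b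
  obtain V where V: "\<And>a b. a < 2^n \<Longrightarrow> b < 2^n \<Longrightarrow>
       U a b = V (\<lambda>i. if i \<in> R then qbit a i else 0) (\<lambda>i. if i \<in> R then qbit b i else 0)
               * (if (\<forall>i<n. i \<notin> R \<longrightarrow> qbit a i = qbit b i) then 1 else 0)"
    using A unfolding acts_only_on_def by blast
  have xi: "x ! i < 4" using x i unfolding pstrings_def by auto
  have phiN: "\<phi> a < N" if "a < N" for a using flip_lt that i unfolding \<phi>_def N_def by blast
  have qo: "qbit (\<phi> a) j = qbit a j" if "j \<noteq> i" for a j using qbit_flip_other that unfolding \<phi>_def by blast
  have qs: "qbit (\<phi> a) i = 1 - qbit a i" for a using qbit_flip_same unfolding \<phi>_def by blast
  have key: "G (\<phi> a) (\<phi> b) = - G a b" if ab: "a < N" "b < N" for a b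
  proof -
    have l1: "(\<lambda>j. if j \<in> R then qbit (\<phi> c) j else 0) = (\<lambda>j. if j \<in> R then qbit c j else 0)" for c
    proof (rule ext)
      fix j show "(if j \<in> R then qbit (\<phi> c) j else 0) = (if j \<in> R then qbit c j else 0)"
        using qo[of j c] i(2) by (cases "j \<in> R") auto
    qed
    have c1: "(qbit (\<phi> b) j = qbit (\<phi> a) j) = (qbit b j = qbit a j)" for j
      using qo[of j a] qo[of j b] qs[of a] qs[of b] qbit_le1[of a i] qbit_le1[of b i]
      by (cases "j = i") auto
    have U: "U (\<phi> b) (\<phi> a) = U b a"
      using V[of "\<phi> b" "\<phi> a"] V[of b a] phiN ab unfolding N_def l1 c1 by simp
    show ?thesis
    proof (cases "U b a = 0")
      case True then show ?thesis unfolding G_def U by simp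
    next
      case False
      then have eq: "qbit b i = qbit a i" using V[of b a] ab i unfolding N_def by (auto split: if_splits)
      have P: "pauli n x (\<phi> b) (\<phi> a) = - pauli n x b a"
      proof -
        have r: "pauli n x c d = pauli1 (x!i) (qbit c i) (qbit d i) * (\<Prod>j\<in>{..<n}-{i}. pauli1 (x!j) (qbit c j) (qbit d j))" for c d
          unfolding pauli_def using i by (simp add: prod.remove)
        have rest: "(\<Prod>j\<in>{..<n}-{i}. pauli1 (x!j) (qbit (\<phi> b) j) (qbit (\<phi> a) j)) = (\<Prod>j\<in>{..<n}-{i}. pauli1 (x!j) (qbit b j) (qbit a j))"
          using qo by (intro prod.cong) auto
        have f: "pauli1 (x!i) (qbit (\<phi> b) i) (qbit (\<phi> a) i) = - pauli1 (x!i) (qbit b i) (qbit a i)"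
          unfolding qs eq using qbit_le1[of a i] xi x(2)
          by (cases "qbit a i = 0"; cases "x ! i = 1"; cases "x ! i = 2"; auto simp: pauli1_def)
        show ?thesis unfolding r[of "\<phi> b"] r[of b] rest f by simp
      qed
      show ?thesis unfolding G_def U P by simp
    qed
  qed
  have bij: "bij_betw \<phi> {..<N} {..<N}"
    by (rule bij_betw_byWitness[where f'=\<phi>]) (auto simp: \<phi>_def flip_flip phiN[unfolded \<phi>_def])
  define S where "S = (\<Sum>a<N. \<Sum>b<N. G a b)"
  have "S = (\<Sum>a<N. \<Sum>b<N. G (\<phi> a) (\<phi> b))"
    unfolding S_def
    by (simp add: sum.reindex_bij_betw[OF bij, of "\<lambda>b. G _ b"] sum.reindex_bij_betw[OF bij, of "\<lambda>a. \<Sum>b<N. G a b"])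
  also have "\<dots> = - S" unfolding S_def by (simp add: key sum_negf)
  finally have "S = 0" by simp
  then show ?thesis unfolding fourier_def S_def G_def N_def by simp
qed



lemma exp_bound: "exp (-2::real) \<le> 1/3"
proof -
  have "3 \<le> exp (2::real)" using exp_ge_add_one_self[of 2] by simp
  then show ?thesis by (simp add: exp_minus field_simps)
qed

lemma main_bound:
  assumes Uu: "unitary n U" and RS: "R \<subseteq> {..<n}" and A: "acts_only_on n U R" and ep: "\<epsilon> > 0"
    and tt: "real t \<ge> 2 * (1 + ln (real (card R))) / \<epsilon>"
  shows "success_prob n U \<epsilon> t \<ge> 2/3"
proof -
  define P where "P = pstrings n"
  define p where "p = bell_prob n U"
  define X where "X = {xs. length xs = t \<and> set xs \<subseteq> P}"
  define B where "B = {i. i < n \<and> Inf n U i \<ge> \<epsilon>}"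
  define Q where "Q i = {x\<in>P. x ! i = 0}" for i
  have fP: "finite P" unfolding P_def by (rule finite_pstrings)
  have fX: "finite X" unfolding X_def using finite_lists_length_eq[OF fP, of t] by (simp add: conj_commute)
  have pnn: "p x \<ge> 0" for x unfolding p_def bell_prob_def by simp
  have sumP: "sum p P = 1" unfolding p_def P_def bell_prob_eq using parseval[OF Uu] .
  have InfQ: "sum p (Q i) = 1 - Inf n U i" for i
  proof -
    have "P = Q i \<union> {x\<in>P. x ! i \<noteq> 0}" unfolding Q_def by auto
    then have "sum p P = sum p (Q i) + sum p {x\<in>P. x ! i \<noteq> 0}"
      using fP by (metis (no_types, lifting) Q_def disjoint_iff finite_Un mem_Collect_eq sum.union_disjoint)
    moreover have "sum p {x\<in>P. x ! i \<noteq> 0} = Inf n U i"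
      unfolding Inf_def p_def P_def bell_prob_eq ..
    ultimately show ?thesis using sumP by simp
  qed
  have Inf_ge: "p x \<le> Inf n U j" if "x \<in> P" "x ! j \<noteq> 0" for x j
  proof -
    have "p x \<le> (\<Sum>x\<in>{x\<in>P. x ! j \<noteq> 0}. p x)"
      by (rule member_le_sum) (use that fP pnn in auto)
    then show ?thesis unfolding Inf_def p_def P_def bell_prob_eq .
  qed
  have BR: "B \<subseteq> R"
  proof
    fix i assume iB: "i \<in> B"
    show "i \<in> R"
    proof (rule ccontr)
      assume "i \<notin> R"
      then have "Inf n U i = 0" unfolding Inf_def using fourier_vanish[OF A] iB unfolding B_def by auto
      then show False using iB ep unfolding B_def by auto
    qed
  qed
  have fR: "finite R" using RS finite_subset by blast
  have fB: "finite B" using BR fR finite_subset by blast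
  define F where "F xs = prod_list (map p xs)" for xs
  have Fnn: "F xs \<ge> 0" for xs unfolding F_def by (induction xs) (auto simp: pnn)
  have termw: "F xs * (if good_output n U \<epsilon> (out_set xs) then 1 else 0)
      \<ge> F xs - (\<Sum>i\<in>B. if (\<forall>x\<in>set xs. x ! i = 0) then F xs else 0)" if xs: "xs \<in> X" for xs
  proof (cases "good_output n U \<epsilon> (out_set xs)")
    case True
    have "(\<Sum>i\<in>B. if (\<forall>x\<in>set xs. x ! i = 0) then F xs else 0) \<ge> 0"
      by (rule sum_nonneg) (simp add: Fnn)
    then show ?thesis using True by simp
  next
    case False
    have lenx: "length x = n" if "x \<in> set xs" for x using xs that unfolding X_def P_def pstrings_def by auto
    have sub: "out_set xs \<subseteq> {..<n}" unfolding out_set_def supp_def using lenx by auto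
    show ?thesis
    proof (cases "B \<subseteq> out_set xs")
      case True
      then obtain j where j: "j \<in> out_set xs" "\<not> Inf n U j > 0"
        using False sub unfolding good_output_def B_def by auto
      then obtain x where x: "x \<in> set xs" "j \<in> supp x" unfolding out_set_def by auto
      have "x \<in> P" using x xs unfolding X_def by auto
      then have "p x \<le> 0" using Inf_ge[of x j] x j unfolding supp_def by auto
      then have "p x = 0" using pnn[of x] by simp
      then have "F xs = 0" unfolding F_def using x by (simp add: prod_list_zero_iff)
      then show ?thesis by (simp add: sum_nonneg)
    next
      case False
      then obtain i where i: "i \<in> B" "i \<notin> out_set xs" by auto
      have "\<forall>x\<in>set xs. x ! i = 0" using i lenx unfolding out_set_def supp_def B_def by auto
      then have "F xs \<le> (\<Sum>i\<in>B. if (\<forall>x\<in>set xs. x ! i = 0) then F xs else 0)"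
        using member_le_sum[of i B "\<lambda>i. if (\<forall>x\<in>set xs. x ! i = 0) then F xs else 0"] i fB Fnn
        by auto
      then show ?thesis using Fnn[of xs] by simp
    qed
  qed
  have sX: "sum F X = 1" unfolding F_def X_def using sum_lists_prod[OF fP, of p t] sumP by simp
  have sXi: "(\<Sum>xs\<in>X. if (\<forall>x\<in>set xs. x ! i = 0) then F xs else 0) = (1 - Inf n U i)^t" for i
  proof -
    have "(\<Sum>xs\<in>X. if (\<forall>x\<in>set xs. x ! i = 0) then F xs else 0) = sum F {xs\<in>X. \<forall>x\<in>set xs. x ! i = 0}"
      using fX by (simp add: sum.inter_filter)
    also have "{xs\<in>X. \<forall>x\<in>set xs. x ! i = 0} = {xs. length xs = t \<and> set xs \<subseteq> Q i}"
      unfolding X_def Q_def by auto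
    also have "sum F \<dots> = (sum p (Q i))^t" unfolding F_def
      by (rule sum_lists_prod) (simp add: Q_def fP)
    finally show ?thesis using InfQ by simp
  qed
  have "success_prob n U \<epsilon> t = (\<Sum>xs\<in>X. F xs * (if good_output n U \<epsilon> (out_set xs) then 1 else 0))"
    unfolding success_prob_def X_def F_def P_def p_def ..
  also have "\<dots> \<ge> (\<Sum>xs\<in>X. F xs - (\<Sum>i\<in>B. if (\<forall>x\<in>set xs. x ! i = 0) then F xs else 0))"
    by (rule sum_mono) (rule termw)
  finally have s1: "success_prob n U \<epsilon> t \<ge> 1 - (\<Sum>i\<in>B. (1 - Inf n U i)^t)"
    by (simp add: sum_subtractf sX sum.swap[of _ B X] sXi)
  show ?thesis
  proof (cases "B = {}")
    case True then show ?thesis using s1 by simp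
  next
    case False
    define r where "r = real (card R)"
    have "card B \<le> card R" using BR fR card_mono by blast
    moreover have "card B \<ge> 1" using False fB by (simp add: Suc_le_eq card_gt_0_iff)
    ultimately have r1: "r \<ge> 1" and cBr: "real (card B) \<le> r" unfolding r_def by auto
    have lnr: "ln r \<ge> 0" using r1 by simp
    have et: "\<epsilon> * t \<ge> 2 * (1 + ln r)" using tt ep unfolding r_def by (simp add: pos_divide_le_eq mult.commute)
    have each: "(1 - Inf n U i)^t \<le> exp (- (\<epsilon> * t))" if "i \<in> B" for i
    proof -
      have nn: "0 \<le> 1 - Inf n U i" using InfQ[of i] sum_nonneg[of "Q i" p] pnn by simp
      have le: "1 - Inf n U i \<le> 1 - \<epsilon>" using that unfolding B_def by simp
      have "(1 - Inf n U i)^t \<le> (1 - \<epsilon>)^t" using power_mono[OF le nn] .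
      also have "\<dots> \<le> (exp (- \<epsilon>))^t"
        using power_mono[of "1 - \<epsilon>" "exp (-\<epsilon>)" t] exp_ge_add_one_self[of "-\<epsilon>"] nn le by simp
      also have "\<dots> = exp (- (\<epsilon> * t))" by (simp add: exp_of_nat_mult[symmetric] mult.commute)
      finally show ?thesis .
    qed
    have "(\<Sum>i\<in>B. (1 - Inf n U i)^t) \<le> (\<Sum>i\<in>B. exp (- (\<epsilon> * t)))" by (rule sum_mono) (rule each)
    also have "\<dots> = real (card B) * exp (- (\<epsilon> * t))" by simp
    also have "\<dots> \<le> r * exp (- (2 + ln r))"
    proof (rule mult_mono[OF cBr])
      show "exp (- (\<epsilon> * t)) \<le> exp (- (2 + ln r))" using et lnr by simp
    qed (use r1 in auto)
    also have "\<dots> = exp (-2)" using r1 by (simp add: exp_diff exp_minus field_simps)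
    also have "\<dots> \<le> 1/3" by (rule exp_bound)
    finally show ?thesis using s1 by simp
  qed
qed


theorem mainTheorem10:
  shows "\<exists>C::real. C > 0 \<and>
    (\<forall>n (U :: nat \<Rightarrow> nat \<Rightarrow> complex) (R :: nat set) (\<epsilon>::real) (t::nat).
       unitary n U \<longrightarrow> R \<subseteq> {..<n} \<longrightarrow> acts_only_on n U R \<longrightarrow> \<epsilon> > 0 \<longrightarrow>
       real t \<ge> C * (1 + ln (real (card R))) / \<epsilon> \<longrightarrow>
       success_prob n U \<epsilon> t \<ge> 2/3)"
proof (intro exI[of _ "2::real"] conjI allI impI)
  fix n U R \<epsilon> t
  assume "unitary n U" "R \<subseteq> {..<n}" "acts_only_on n U R" "(\<epsilon>::real) > 0"
    "real t \<ge> 2 * (1 + ln (real (card R))) / \<epsilon>"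
  then show "success_prob n U \<epsilon> t \<ge> 2/3" by (rule main_bound)
qed simp

end
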